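(* Let $\mathcal{B}$ be a prime Banach algebra over $\mathbb{R}$ or $\mathbb{C}$, and let $\mathcal{H}_1,\mathcal{H}_2$ be non-empty open subsets of $\mathcal{B}$. Suppose $\mathcal{B}$ admits a continuous generalized derivation $F$ associated with a derivation $d$ that is not injective, such that for every $(x,y)\in\mathcal{H}_1\times\mathcal{H}_2$ there exist positive integers $p=p(x,y)$, $q=q(x,y)$ with $$F(x^{p}\circ y^{q})+[x^{p},y^{q}]\in Z(\mathcal{B}).$$ Then $\mathcal{B}$ is commutative or $d(Z(\mathcal{B}))=\{0\}$.
   Context: $Z(\mathcal{B})$ denotes the center of $\mathcal{B}$. For $x,y\in\mathcal{B}$, $x\circ y=xy+yx$ and $[x,y]=xy-yx$. $\mathcal{B}$ is prime if $x\mathcal{B}y=\{0\}$ implies $x=0$ or $y=0$. A derivation is an additive map $d:\mathcal{B}\to\mathcal{B}$ with $d(xy)=d(x)y+xd(y)$ for all $x,y$. A generalized derivation associated with the derivation $d$ is an additive map $F:\mathcal{B}\to\mathcal{B}$ with $F(xy)=F(x)y+xd(y)$ for all $x,y\in\mathcal{B}$. *)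

theory Defs
  imports "HOL-Analysis.Analysis"
begin

text \<open>Positive powers in a (possibly non-unital) algebra: ppow x n = x^n for n >= 1.
  The value at n = 0 is irrelevant (only positive exponents are used).\<close>
fun ppow :: "'a::semigroup_mult \<Rightarrow> nat \<Rightarrow> 'a" where
  "ppow x 0 = x"
| "ppow x (Suc 0) = x"
| "ppow x (Suc (Suc n)) = ppow x (Suc n) * x"

definition center :: "'a::semigroup_mult set" where
  "center = {z. \<forall>x. z * x = x * z}"

definition jordan :: "'a::{semigroup_mult,plus} \<Rightarrow> 'a \<Rightarrow> 'a" where
  "jordan x y = x * y + y * x"

definition commutator :: "'a::{semigroup_mult,minus} \<Rightarrow> 'a \<Rightarrow> 'a" where
  "commutator x y = x * y - y * x"

definition prime_ring :: "'a::ring itself \<Rightarrow> bool" where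
  "prime_ring _ \<longleftrightarrow> (\<forall>x y::'a. (\<forall>b. x * b * y = 0) \<longrightarrow> x = 0 \<or> y = 0)"

definition additive :: "('a::ring \<Rightarrow> 'a) \<Rightarrow> bool" where
  "additive f \<longleftrightarrow> (\<forall>x y. f (x + y) = f x + f y)"

definition derivation :: "('a::ring \<Rightarrow> 'a) \<Rightarrow> bool" where
  "derivation d \<longleftrightarrow> additive d \<and> (\<forall>x y. d (x * y) = d x * y + x * d y)"

definition gen_derivation :: "('a::ring \<Rightarrow> 'a) \<Rightarrow> ('a \<Rightarrow> 'a) \<Rightarrow> bool" where
  "gen_derivation F d \<longleftrightarrow> derivation d \<and> additive F \<and>
     (\<forall>x y. F (x * y) = F x * y + x * d y)"

end

theory Submission
  imports Defs
begin

lemma ppow_Suc: "n > 0 \<Longrightarrow> ppow x (Suc n) = ppow x n * x"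
  by (cases n) auto

lemma center_iff: "z \<in> center \<longleftrightarrow> (\<forall>x. z * x = x * z)"
  by (simp add: center_def)

lemma center_add: "a \<in> center \<Longrightarrow> b \<in> center \<Longrightarrow> (a + b :: 'a::ring) \<in> center"
  by (simp add: center_def algebra_simps)

lemma center_diff: "a \<in> center \<Longrightarrow> b \<in> center \<Longrightarrow> (a - b :: 'a::ring) \<in> center"
  by (simp add: center_def algebra_simps)

lemma center_zero: "(0::'a::ring) \<in> center"
  by (simp add: center_def)

lemma center_mult:
  assumes a: "a \<in> center" and b: "b \<in> center" shows "(a * b :: 'a::ring) \<in> center"
  unfolding center_iff
proof
  fix x
  have "a * b * x = a * (x * b)" using b by (simp add: center_iff mult.assoc)
  also have "\<dots> = (x * a) * b" using a by (simp add: center_iff flip: mult.assoc)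
  finally show "a * b * x = x * (a * b)" by (simp add: mult.assoc)
qed

lemma center_scaleR: "a \<in> center \<Longrightarrow> (c *\<^sub>R a :: 'a::real_algebra) \<in> center"
  by (simp add: center_def)

lemma center_sum: "(\<And>i. i \<in> I \<Longrightarrow> f i \<in> center) \<Longrightarrow> (sum f I :: 'a::ring) \<in> center"
  by (induction I rule: infinite_finite_induct) (auto intro: center_add center_zero)

lemma ppow_center: "(z::'a::ring) \<in> center \<Longrightarrow> ppow z n \<in> center"
  by (induction z n rule: ppow.induct) (auto intro: center_mult)

lemma ppow_comm: "(z::'a::ring) \<in> center \<Longrightarrow> ppow z n * x = x * ppow z n"
  using ppow_center center_iff by blast

lemma ppow_sq:
  fixes z :: "'a::ring"
  assumes "z \<in> center"
  shows "ppow (z * z) n = ppow z n * ppow z n"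
proof (induction n)
  case 0 then show ?case by simp
next
  case (Suc n)
  show ?case
  proof (cases "n = 0")
    case True then show ?thesis by simp
  next
    case False
    have "ppow (z * z) (Suc n) = ppow z n * ppow z n * (z * z)"
      using False Suc by (simp add: ppow_Suc)
    also have "\<dots> = ppow z n * ((ppow z n * z) * z)" by (simp add: mult.assoc)
    also have "\<dots> = ppow z n * ((z * ppow z n) * z)"
      using assms by (simp add: center_iff)
    also have "\<dots> = (ppow z n * z) * (ppow z n * z)" by (simp add: mult.assoc)
    finally show ?thesis using False by (simp add: ppow_Suc)
  qed
qed

lemma central_nzd:
  fixes u v :: "'a::ring"
  assumes "prime_ring TYPE('a)" "u \<in> center" "u \<noteq> 0" "u * v = 0"
  shows "v = 0"
proof -
  have "\<forall>b. u * b * v = 0"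
  proof
    fix b
    have "u * b * v = b * (u * v)" using assms(2) by (simp add: center_iff mult.assoc)
    then show "u * b * v = 0" using assms(4) by simp
  qed
  then show ?thesis using assms(1,3) unfolding prime_ring_def by blast
qed

lemma central_cancel:
  fixes u v :: "'a::ring"
  assumes "prime_ring TYPE('a)" "u \<in> center" "u \<noteq> 0" "u * v \<in> center"
  shows "v \<in> center"
  unfolding center_iff
proof
  fix b
  have "u * (v * b - b * v) = (u * v) * b - b * (u * v)"
    using assms(2) by (simp add: center_iff algebra_simps)
  also have "\<dots> = 0" using assms(4) by (simp add: center_iff)
  finally have "v * b - b * v = 0" by (rule central_nzd[OF assms(1-3)])
  then show "v * b = b * v" by simp
qed

lemma central_mult_nz:
  fixes u v :: "'a::ring"
  assumes "prime_ring TYPE('a)" "u \<in> center" "u \<noteq> 0" "v \<noteq> 0"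
  shows "u * v \<noteq> 0"
  using central_nzd[OF assms(1-3)] assms(4) by blast

lemma ppow_nz:
  fixes u :: "'a::ring"
  assumes "prime_ring TYPE('a)" "u \<in> center" "u \<noteq> 0"
  shows "ppow u n \<noteq> 0"
proof (induction n)
  case (Suc n)
  then show ?case
  proof (cases "n = 0")
    case False
    then have "ppow u (Suc n) = u * ppow u n"
      using assms(2) by (simp add: ppow_Suc center_iff)
    then show ?thesis using central_mult_nz[OF assms] Suc by simp
  qed (use assms in simp)
qed (use assms in simp)

lemma deriv_add: "derivation d \<Longrightarrow> d (x + y) = d x + d y"
  by (simp add: derivation_def Defs.additive_def)

lemma deriv_mult: "derivation d \<Longrightarrow> d (x * y) = d x * y + x * d y"
  by (simp add: derivation_def)

lemma d_center:
  fixes d :: "'a::ring \<Rightarrow> 'a"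
  assumes "derivation d" "z \<in> center"
  shows "d z \<in> center"
  unfolding center_iff
proof
  fix x
  have "d (z * x) = d (x * z)" using assms(2) by (simp add: center_iff)
  then have "d z * x + z * d x = d x * z + x * d z" using deriv_mult[OF assms(1)] by simp
  moreover have "z * d x = d x * z" using assms(2) by (simp add: center_iff)
  ultimately show "d z * x = x * d z" by simp
qed

lemma d_ppow:
  fixes d :: "'a::real_algebra \<Rightarrow> 'a"
  assumes "derivation d" "z \<in> center" "n > 0"
  shows "z * d (ppow z n) = of_nat n *\<^sub>R (ppow z n * d z)"
  using assms(3)
proof (induction n)
  case (Suc n)
  show ?case
  proof (cases "n = 0")
    case True then show ?thesis by simp
  next
    case False
    let ?P = "ppow z n"
    have IH: "z * d ?P = of_nat n *\<^sub>R (?P * d z)" using Suc False by simp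
    have cz: "\<And>x. z * x = x * z" using assms(2) by (simp add: center_iff)
    have cdz: "\<And>x. d z * x = x * d z" using d_center[OF assms(1,2)] by (simp add: center_iff)
    have "z * d (ppow z (Suc n)) = z * (d ?P * z + ?P * d z)"
      using False by (simp add: ppow_Suc deriv_mult[OF assms(1)])
    also have "\<dots> = (z * d ?P) * z + z * ?P * d z" by (simp add: algebra_simps)
    also have "\<dots> = of_nat n *\<^sub>R (?P * z * d z) + ?P * z * d z"
    proof -
      have 1: "(z * d ?P) * z = of_nat n *\<^sub>R (?P * z * d z)"
        by (simp add: IH mult.assoc cdz[of z])
      have 2: "z * ?P * d z = ?P * z * d z" by (simp only: cz[of "?P"])
      show ?thesis by (simp only: 1 2)
    qed
    also have "\<dots> = of_nat (Suc n) *\<^sub>R (ppow z (Suc n) * d z)"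
      using False by (simp add: ppow_Suc algebra_simps)
    finally show ?thesis .
  qed
qed simp

lemma addF:
  assumes "Defs.additive F"
  shows "F 0 = 0" "F (x + y) = F x + F y" "F (- x) = - F x" "F (x - y) = F x - F y"
proof -
  have a: "\<And>x y. F (x + y) = F x + F y" using assms by (simp add: Defs.additive_def)
  have z: "F 0 = 0" using a[of 0 0] by simp
  have n: "\<And>x. F (- x) = - F x" using a z by (metis add.right_inverse eq_neg_iff_add_eq_0)
  show "F 0 = 0" by (rule z)
  show "F (x + y) = F x + F y" by (rule a)
  show "F (- x) = - F x" by (rule n)
  show "F (x - y) = F x - F y" using a[of x "- y"] n[of y] by simp
qed

lemma addF_sum:
  assumes "Defs.additive F"
  shows "F (sum g I) = (\<Sum>i\<in>I. F (g i))"
  by (induction I rule: infinite_finite_induct) (auto simp: addF[OF assms])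

lemma addF_nat:
  fixes F :: "'a::real_algebra \<Rightarrow> 'a"
  assumes "Defs.additive F"
  shows "F (of_nat m *\<^sub>R v) = of_nat m *\<^sub>R F v"
proof (induction m)
  case 0 show ?case using addF(1)[OF assms] by simp
next
  case (Suc m)
  have "F (of_nat (Suc m) *\<^sub>R v) = F (v + of_nat m *\<^sub>R v)" by (simp add: scaleR_add_left)
  also have "\<dots> = F v + of_nat m *\<^sub>R F v" by (simp only: addF(2)[OF assms] Suc.IH)
  also have "\<dots> = of_nat (Suc m) *\<^sub>R F v" by (simp add: scaleR_add_left)
  finally show ?case .
qed

lemma addF_inv:
  fixes F :: "'a::real_algebra \<Rightarrow> 'a"
  assumes "Defs.additive F"
  shows "F ((1 / of_nat m) *\<^sub>R v) = (1 / of_nat m) *\<^sub>R F v"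
proof (cases "m = 0")
  case True then show ?thesis by (simp add: addF[OF assms])
next
  case False
  have "F v = F (of_nat m *\<^sub>R ((1 / of_nat m) *\<^sub>R v))" using False by simp
  also have "\<dots> = of_nat m *\<^sub>R F ((1 / of_nat m) *\<^sub>R v)" by (rule addF_nat[OF assms])
  finally show ?thesis using False by simp
qed

lemma addF_invpow:
  fixes F :: "'a::real_algebra \<Rightarrow> 'a"
  assumes "Defs.additive F"
  shows "F ((1 / of_nat m) ^ k *\<^sub>R v) = (1 / of_nat m) ^ k *\<^sub>R F v"
  using addF_inv[OF assms, of "m ^ k" v] by (simp add: power_one_over)

lemma expand:
  fixes x0 a :: "'a::real_algebra"
  assumes "n > 0"
  shows "\<exists>W. (\<forall>t. ppow (x0 + t *\<^sub>R a) n = (\<Sum>k\<le>n. t^k *\<^sub>R W k)) \<and> W n = ppow a n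
     \<and> W 0 = ppow x0 n \<and> (x0 \<in> center \<longrightarrow> x0 * W 1 = of_nat n *\<^sub>R (ppow x0 n * a))"
  using assms
proof (induction n)
  case 0 thus ?case by simp
next
  case (Suc n)
  show ?case
  proof (cases "n = 0")
    case True
    show ?thesis
      by (rule exI[of _ "\<lambda>k. if k = 0 then x0 else a"]) (simp add: True)
  next
    case False
    obtain W where W: "\<forall>t. ppow (x0 + t *\<^sub>R a) n = (\<Sum>k\<le>n. t^k *\<^sub>R W k)" "W n = ppow a n"
      "W 0 = ppow x0 n" "x0 \<in> center \<longrightarrow> x0 * W 1 = of_nat n *\<^sub>R (ppow x0 n * a)"
      using Suc False by auto
    define W' where "W' k = (if k \<le> n then W k * x0 else 0) + (if 1 \<le> k then W (k-1) * a else 0)" for k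
    have e: "ppow (x0 + t *\<^sub>R a) (Suc n) = (\<Sum>k\<le>Suc n. t^k *\<^sub>R W' k)" for t
    proof -
      have "ppow (x0 + t *\<^sub>R a) (Suc n) = (\<Sum>k\<le>n. t^k *\<^sub>R W k) * (x0 + t *\<^sub>R a)"
        using False W(1) by (simp add: ppow_Suc)
      also have "\<dots> = (\<Sum>k\<le>n. t^k *\<^sub>R W k) * x0 + (\<Sum>k\<le>n. t^k *\<^sub>R W k) * (t *\<^sub>R a)"
        by (simp add: distrib_left)
      also have "\<dots> = (\<Sum>k\<le>n. t^k *\<^sub>R (W k * x0)) + (\<Sum>k\<le>n. t^(Suc k) *\<^sub>R (W k * a))"
        by (simp add: sum_distrib_right scaleR_sum_right mult.commute)
      also have "(\<Sum>k\<le>n. t^k *\<^sub>R (W k * x0)) = (\<Sum>k\<le>Suc n. t^k *\<^sub>R (if k \<le> n then W k * x0 else 0))"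
        by (simp add: sum.atMost_Suc)
      also have "(\<Sum>k\<le>n. t^(Suc k) *\<^sub>R (W k * a)) = (\<Sum>k\<le>Suc n. t^k *\<^sub>R (if 1 \<le> k then W (k-1) * a else 0))"
        by (simp del: sum.atMost_Suc add: sum.atMost_Suc_shift)
      finally show ?thesis
        by (simp add: W'_def scaleR_add_right sum.distrib)
    qed
    have c: "x0 * W' 1 = of_nat (Suc n) *\<^sub>R (ppow x0 (Suc n) * a)" if x0c: "x0 \<in> center"
    proof -
      have cz: "\<And>y. x0 * y = y * x0" using x0c by (simp add: center_iff)
      have "x0 * W' 1 = (x0 * W 1) * x0 + x0 * ppow x0 n * a"
        using False W(3) by (simp add: W'_def algebra_simps)
      also have "\<dots> = of_nat n *\<^sub>R (ppow x0 n * (a * x0)) + ppow x0 n * x0 * a"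
        using W(4) x0c by (simp add: mult.assoc cz[of "ppow x0 n"])
      also have "\<dots> = of_nat (Suc n) *\<^sub>R (ppow x0 (Suc n) * a)"
        using False by (simp add: ppow_Suc cz[of a, symmetric] mult.assoc algebra_simps)
      finally show ?thesis .
    qed
    show ?thesis
      apply (rule exI[of _ W'])
      using e c False W(2,3) by (simp add: W'_def ppow_Suc)
  qed
qed

lemma coeff_zero:
  fixes u :: "nat \<Rightarrow> 'b::real_normed_vector"
  assumes "\<forall>n\<ge>n0. (\<Sum>k\<le>N. (1 / real n)^k *\<^sub>R u k) = 0"
  shows "\<forall>k\<le>N. u k = 0"
  using assms
proof (induction N arbitrary: u n0)
  case 0
  then show ?case by auto
next
  case (Suc N)
  let ?f = "\<lambda>n. (\<Sum>k\<le>Suc N. (1 / real n)^k *\<^sub>R u k)"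
  have lim0: "?f \<longlonglongrightarrow> (\<Sum>k\<le>Suc N. (0::real)^k *\<^sub>R u k)"
    by (intro tendsto_intros lim_1_over_n)
  have "(\<Sum>k\<le>Suc N. (0::real)^k *\<^sub>R u k) = u 0"
    by (simp only: sum.atMost_Suc_shift) simp
  then have l1: "?f \<longlonglongrightarrow> u 0" using lim0 by (simp only:)
  have "eventually (\<lambda>n. ?f n = 0) sequentially"
    using Suc.prems eventually_sequentially by blast
  then have l2: "?f \<longlonglongrightarrow> 0"
    by (simp add: tendsto_eventually)
  have u0: "u 0 = 0" using LIMSEQ_unique[OF l1 l2] .
  have "\<forall>n\<ge>max n0 1. (\<Sum>k\<le>N. (1 / real n)^k *\<^sub>R u (Suc k)) = 0"
  proof (intro allI impI)
    fix n assume n: "max n0 1 \<le> n"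
    have "0 = ?f n" using Suc.prems n by simp
    also have "\<dots> = (1 / real n) *\<^sub>R (\<Sum>k\<le>N. (1 / real n)^k *\<^sub>R u (Suc k))"
      by (simp del: sum.atMost_Suc add: sum.atMost_Suc_shift u0 scaleR_sum_right)
    finally show "(\<Sum>k\<le>N. (1 / real n)^k *\<^sub>R u (Suc k)) = 0" using n by simp
  qed
  from Suc.IH[OF this] have "\<forall>k\<le>N. u (Suc k) = 0" .
  then show ?case using u0 by (metis Suc_le_mono not0_implies_Suc)
qed

lemma coeff_center:
  fixes h :: "nat \<Rightarrow> 'a::real_normed_algebra"
  assumes "\<forall>n\<ge>m. (\<Sum>k\<le>N. (1 / real n)^k *\<^sub>R h k) \<in> center"
  shows "\<forall>k\<le>N. h k \<in> center"
proof -
  have "\<forall>k\<le>N. h k * b - b * h k = 0" for b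
  proof -
    have "\<forall>n\<ge>m. (\<Sum>k\<le>N. (1 / real n)^k *\<^sub>R (h k * b - b * h k)) = 0"
    proof (intro allI impI)
      fix n assume "m \<le> n"
      then have "(\<Sum>k\<le>N. (1 / real n)^k *\<^sub>R h k) \<in> center" using assms by blast
      then have "(\<Sum>k\<le>N. (1 / real n)^k *\<^sub>R h k) * b - b * (\<Sum>k\<le>N. (1 / real n)^k *\<^sub>R h k) = 0"
        by (simp add: center_iff)
      then show "(\<Sum>k\<le>N. (1 / real n)^k *\<^sub>R (h k * b - b * h k)) = 0"
        by (simp add: sum_distrib_right sum_distrib_left scaleR_diff_right sum_subtractf)
    qed
    from coeff_zero[OF this] show ?thesis .
  qed
  then show ?thesis by (simp add: center_iff)
qed

lemma closed_center: "closed (center :: 'a::real_normed_algebra set)"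
proof -
  have eq: "center = (\<Inter>b. {z::'a. z * b = b * z})" by (auto simp: center_iff)
  have cl: "closed {z::'a. z * b = b * z}" for b
    by (intro closed_Collect_eq continuous_intros)
  show ?thesis unfolding eq by (rule closed_INT) (simp add: cl)
qed

lemma continuous_ppow: "continuous_on UNIV (\<lambda>x::'a::real_normed_algebra. ppow x n)"
proof (induction n rule: less_induct)
  case (less n)
  show ?case
  proof (cases n)
    case 0 then show ?thesis by (simp add: continuous_on_id)
  next
    case (Suc m)
    show ?thesis
    proof (cases m)
      case 0 then show ?thesis using Suc by (simp add: continuous_on_id)
    next
      case (Suc k)
      have "continuous_on UNIV (\<lambda>x::'a. ppow x (Suc k))" using less \<open>n = Suc m\<close> Suc by simp
      then have "continuous_on UNIV (\<lambda>x::'a. ppow x (Suc k) * x)"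
        by (intro continuous_intros)
      then show ?thesis using \<open>n = Suc m\<close> Suc by simp
    qed
  qed
qed

lemma baire_ball:
  fixes F :: "'a::{real_normed_algebra,banach} \<Rightarrow> 'a" and H1 H2 :: "'a set"
  assumes "open H1" "H1 \<noteq> {}" "open H2" "H2 \<noteq> {}" and cF: "continuous_on UNIV F"
   and hyp: "\<forall>x\<in>H1. \<forall>y\<in>H2. \<exists>p q. p > 0 \<and> q > 0 \<and>
           F (jordan (ppow x p) (ppow y q)) + commutator (ppow x p) (ppow y q) \<in> center"
  shows "\<exists>p q x1 y1 \<rho>. p > 0 \<and> q > 0 \<and> \<rho> > 0 \<and> (\<forall>x y. dist x x1 < \<rho> \<longrightarrow> dist y y1 < \<rho> \<longrightarrow>
           F (jordan (ppow x p) (ppow y q)) + commutator (ppow x p) (ppow y q) \<in> center)"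
proof -
  define g where "g pq v = F (jordan (ppow (fst v) (fst pq)) (ppow (snd v) (snd pq)))
     + commutator (ppow (fst v) (fst pq)) (ppow (snd v) (snd pq))" for pq :: "nat \<times> nat" and v :: "'a \<times> 'a"
  define S where "S pq = {v. fst pq > 0 \<and> snd pq > 0 \<and> g pq v \<in> center}" for pq
  have cg: "continuous_on UNIV (g pq)" for pq
  proof -
    have c1: "continuous_on UNIV (\<lambda>v::'a\<times>'a. ppow (fst v) (fst pq))"
      by (rule continuous_on_compose2[OF continuous_ppow continuous_on_fst]) (auto intro: continuous_on_id)
    have c2: "continuous_on UNIV (\<lambda>v::'a\<times>'a. ppow (snd v) (snd pq))"
      by (rule continuous_on_compose2[OF continuous_ppow continuous_on_snd]) (auto intro: continuous_on_id)
    have c3: "continuous_on UNIV (\<lambda>v::'a\<times>'a. F (jordan (ppow (fst v) (fst pq)) (ppow (snd v) (snd pq))))"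
      unfolding jordan_def
      by (rule continuous_on_compose2[OF cF]) (auto intro!: continuous_intros c1 c2)
    show ?thesis unfolding g_def commutator_def
      by (intro continuous_intros c1 c2 c3)
  qed
  have clS: "closed (S pq)" for pq
  proof (cases "fst pq > 0 \<and> snd pq > 0")
    case True
    then have "S pq = g pq -` center" by (auto simp: S_def)
    then show ?thesis using closed_vimage[OF closed_center cg] by simp
  next
    case False
    then have "S pq = {}" by (auto simp: S_def)
    then show ?thesis by simp
  qed
  have sub: "H1 \<times> H2 \<subseteq> \<Union>(range S)"
  proof
    fix v assume "v \<in> H1 \<times> H2"
    then obtain p q where "p > 0" "q > 0" "g (p, q) v \<in> center"
      using hyp by (force simp: g_def)
    then show "v \<in> \<Union>(range S)" by (auto simp: S_def)
  qed
  have "H1 \<times> H2 \<subseteq> interior (\<Union>(range S))"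
    using sub by (intro interior_maximal) (auto intro: open_Times assms)
  moreover have "H1 \<times> H2 \<noteq> {}" using assms by auto
  ultimately have ne: "interior (\<Union>(range S)) \<noteq> {}" by blast
  have "\<exists>pq. interior (S pq) \<noteq> {}"
  proof (rule ccontr)
    assume "\<not> ?thesis"
    then have "euclidean interior_of \<Union>(range S) = {}"
      by (intro Baire_category_alt)
         (auto simp: completely_metrizable_space_euclidean clS closed_closedin[symmetric])
    then show False using ne by simp
  qed
  then obtain pq v where "v \<in> interior (S pq)" by blast
  then obtain e where e: "e > 0" "ball v e \<subseteq> S pq" by (auto simp: mem_interior)
  then have "v \<in> S pq" by auto
  then have pq: "fst pq > 0" "snd pq > 0" by (auto simp: S_def)
  have "\<forall>x y. dist x (fst v) < e/2 \<longrightarrow> dist y (snd v) < e/2 \<longrightarrow>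
           F (jordan (ppow x (fst pq)) (ppow y (snd pq))) + commutator (ppow x (fst pq)) (ppow y (snd pq)) \<in> center"
  proof (intro allI impI)
    fix x y assume xy: "dist x (fst v) < e/2" "dist y (snd v) < e/2"
    have "dist v (x, y) = norm (fst v - x, snd v - y)"
      by (cases v) (simp add: dist_norm)
    also have "\<dots> \<le> norm (fst v - x) + norm (snd v - y)" by (rule norm_Pair_le)
    also have "\<dots> < e" using xy by (simp add: dist_norm norm_minus_commute)
    finally have "(x, y) \<in> S pq" using e by auto
    then show "F (jordan (ppow x (fst pq)) (ppow y (snd pq))) + commutator (ppow x (fst pq)) (ppow y (snd pq)) \<in> center"
      by (simp add: S_def g_def)
  qed
  then show ?thesis using pq e(1) by (intro exI[of _ "fst pq"] exI[of _ "snd pq"] exI[of _ "fst v"] exI[of _ "snd v"] exI[of _ "e/2"]) auto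
qed

lemma ball_seq:
  fixes y1 w :: "'a::real_normed_vector"
  assumes "\<rho> > 0"
  shows "\<exists>n0. \<forall>n\<ge>n0. dist (y1 + (1 / real n) *\<^sub>R w) y1 < \<rho>"
proof -
  obtain N where N: "norm w / \<rho> < real N" using reals_Archimedean2 by blast
  have "dist (y1 + (1 / real n) *\<^sub>R w) y1 < \<rho>" if "n \<ge> Suc N" for n
  proof -
    have n: "real n > 0" "real N \<le> real n" using that by auto
    have "norm w < \<rho> * real N" using N assms by (simp add: field_simps)
    also have "\<dots> \<le> \<rho> * real n" using n assms by simp
    finally have "norm w / real n < \<rho>" using n by (simp add: field_simps)
    then show ?thesis by (simp add: dist_norm)
  qed
  then show ?thesis by blast
qed

lemma step1:
  fixes F d :: "'a::real_normed_algebra \<Rightarrow> 'a"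
  assumes gd: "gen_derivation F d" and q: "q > 0" and \<rho>: "\<rho> > 0"
   and ball: "\<forall>y. dist y y1 < \<rho> \<longrightarrow> F (jordan X (ppow y q)) + commutator X (ppow y q) \<in> center"
   and w: "w \<in> center"
  shows "F (X * ppow w q) \<in> center"
proof -
  have aF: "Defs.additive F" using gd by (simp add: gen_derivation_def)
  obtain W where W: "\<forall>t. ppow (y1 + t *\<^sub>R w) q = (\<Sum>k\<le>q. t^k *\<^sub>R W k)" "W q = ppow w q"
    using expand[OF q, of y1 w] by blast
  obtain n0 where n0: "\<forall>n\<ge>n0. dist (y1 + (1/real n) *\<^sub>R w) y1 < \<rho>"
    using ball_seq[OF \<rho>] by blast
  define H where "H Y = F (X*Y + Y*X) + (X*Y - Y*X)" for Y
  have Hlin: "H (\<Sum>k\<le>q. (1/real n)^k *\<^sub>R W k) = (\<Sum>k\<le>q. (1/real n)^k *\<^sub>R H (W k))" for n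
  proof -
    have "F (X * (\<Sum>k\<le>q. (1/real n)^k *\<^sub>R W k) + (\<Sum>k\<le>q. (1/real n)^k *\<^sub>R W k) * X)
        = F (\<Sum>k\<le>q. (1/real n)^k *\<^sub>R (X * W k + W k * X))"
      by (simp add: sum_distrib_left sum_distrib_right scaleR_add_right sum.distrib)
    also have "\<dots> = (\<Sum>k\<le>q. (1/real n)^k *\<^sub>R F (X * W k + W k * X))"
      by (simp only: addF_sum[OF aF] addF_invpow[OF aF])
    finally show ?thesis
      by (simp add: H_def sum_distrib_left sum_distrib_right scaleR_add_right scaleR_diff_right
          sum.distrib sum_subtractf)
  qed
  have "\<forall>n\<ge>n0. (\<Sum>k\<le>q. (1/real n)^k *\<^sub>R H (W k)) \<in> center"
  proof (intro allI impI)
    fix n assume "n0 \<le> n"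
    then have "F (jordan X (ppow (y1 + (1/real n) *\<^sub>R w) q)) + commutator X (ppow (y1 + (1/real n) *\<^sub>R w) q) \<in> center"
      using n0 ball by blast
    then have "H (ppow (y1 + (1/real n) *\<^sub>R w) q) \<in> center"
      by (simp add: H_def jordan_def commutator_def)
    then show "(\<Sum>k\<le>q. (1/real n)^k *\<^sub>R H (W k)) \<in> center"
      using W(1) Hlin by simp
  qed
  then have "H (W q) \<in> center" using coeff_center[where m=n0 and N=q and h="\<lambda>k. H (W k)"] by simp
  moreover have "ppow w q * X = X * ppow w q" using ppow_comm[OF w] by simp
  ultimately have "F (X * ppow w q + X * ppow w q) \<in> center"
    using W(2) by (simp add: H_def)
  then have "F (X * ppow w q) + F (X * ppow w q) \<in> center" by (simp add: addF(2)[OF aF])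
  then have "2 *\<^sub>R F (X * ppow w q) \<in> center" by (simp add: scaleR_2)
  then have "(1/2) *\<^sub>R (2 *\<^sub>R F (X * ppow w q)) \<in> center" by (rule center_scaleR)
  then show ?thesis by simp
qed

theorem theorem3p2:
  fixes F d :: "'a::{real_normed_algebra, banach} \<Rightarrow> 'a"
    and H1 H2 :: "'a set"
  assumes "prime_ring TYPE('a)"
    and "open H1" and "H1 \<noteq> {}"
    and "open H2" and "H2 \<noteq> {}"
    and "gen_derivation F d"
    and "continuous_on UNIV F"
    and "\<not> inj d"
    and "\<forall>x\<in>H1. \<forall>y\<in>H2. \<exists>p q. p > 0 \<and> q > 0 \<and>
           F (jordan (ppow x p) (ppow y q)) + commutator (ppow x p) (ppow y q) \<in> center"
  shows "(\<forall>x y::'a. x * y = y * x) \<or> (\<forall>z\<in>center. d z = 0)"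
proof -
  have dd: "derivation d" and aF: "Defs.additive F" and Fm: "\<And>x y. F (x * y) = F x * y + x * d y"
    using assms(6) by (auto simp: gen_derivation_def)
  have ad: "Defs.additive d" using dd by (simp add: derivation_def)
  obtain p q x1 y1 \<rho> where p: "p > 0" and q: "q > 0" and \<rho>: "\<rho> > 0" and ball:
    "\<And>x y. dist x x1 < \<rho> \<Longrightarrow> dist y y1 < \<rho> \<Longrightarrow>
       F (jordan (ppow x p) (ppow y q)) + commutator (ppow x p) (ppow y q) \<in> center"
    using baire_ball[OF assms(2-5,7,9)] by blast
  show ?thesis
  proof (rule disjCI)
    assume "\<not> (\<forall>z\<in>center. d z = 0)"
    then obtain z where zc: "z \<in> center" and cz: "d z \<noteq> 0" by blast
    have z0: "z \<noteq> 0" using cz addF(1)[OF ad] by auto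
    define c where "c = d z"
    have cc: "c \<in> center" using d_center[OF dd zc] c_def by simp
    define U where "U = ppow z q"
    have Uc: "U \<in> center" by (simp add: U_def ppow_center zc)
    have U0: "U \<noteq> 0" using ppow_nz[OF assms(1) zc z0] U_def by simp
    define e where "e = d U"
    have ec: "e \<in> center" using d_center[OF dd Uc] e_def by simp
    have ze: "z * e = of_nat q *\<^sub>R (U * c)" using d_ppow[OF dd zc q] by (simp add: U_def e_def c_def)
    moreover have "U * c \<noteq> 0" using central_mult_nz[OF assms(1) Uc U0] cz c_def by simp
    ultimately have "z * e \<noteq> 0" using q by simp
    then have e0: "e \<noteq> 0" by auto
    have cU: "\<And>y. U * y = y * U" using Uc by (simp add: center_iff)
    have eU0: "e * U \<noteq> 0" using central_mult_nz[OF assms(1) Uc U0 e0] cU[of e] by simp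
    have eUc: "e * U \<in> center" using center_mult[OF ec Uc] .
    have UU: "ppow (z*z) q = U * U" using ppow_sq[OF zc] U_def by simp
    have zzc: "z * z \<in> center" using center_mult[OF zc zc] .
    have Xc: "ppow x p \<in> center" if x: "dist x x1 < \<rho>" for x
    proof -
      define X where "X = ppow x p"
      have ballx: "\<forall>y. dist y y1 < \<rho> \<longrightarrow> F (jordan X (ppow y q)) + commutator X (ppow y q) \<in> center"
        using x ball X_def by blast
      have f1: "F (X * U) \<in> center" using step1[OF assms(6) q \<rho> ballx zc] U_def by simp
      have f2: "F (X * (U * U)) \<in> center" using step1[OF assms(6) q \<rho> ballx zzc] UU by simp
      have e1: "F (X * U) = F X * U + X * e" using Fm e_def by simp
      have e2: "F (X * (U*U)) = F X * (U*U) + X * (e * U) + X * (e * U)"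
        using Fm deriv_mult[OF dd, of U U] e_def cU[of e] by (simp add: distrib_left add.assoc)
      have e3: "U * F (X * U) = F X * (U*U) + X * (e * U)"
      proof -
        have "U * F (X * U) = U * (F X * U) + U * (X * e)" by (simp add: e1 distrib_left)
        also have "U * (F X * U) = F X * (U * U)" by (simp add: cU[of "F X * U"] mult.assoc)
        also have "U * (X * e) = X * (e * U)" by (simp add: cU[of "X * e"] mult.assoc)
        finally show ?thesis .
      qed
      have "F (X * (U*U)) - U * F (X * U) \<in> center"
        by (rule center_diff[OF f2 center_mult[OF Uc f1]])
      then have "X * (e * U) \<in> center" by (simp add: e2 e3)
      moreover have "X * (e * U) = (e * U) * X" using eUc by (simp add: center_iff)
      ultimately have "(e * U) * X \<in> center" by simp
      then have "X \<in> center" by (rule central_cancel[OF assms(1) eUc eU0])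
      then show ?thesis by (simp add: X_def)
    qed
    have Ac: "ppow a p \<in> center" for a :: 'a
    proof -
      obtain W where W: "\<forall>t. ppow (x1 + t *\<^sub>R a) p = (\<Sum>k\<le>p. t^k *\<^sub>R W k)" "W p = ppow a p"
        using expand[OF p, of x1 a] by blast
      obtain n0 where n0: "\<forall>n\<ge>n0. dist (x1 + (1/real n) *\<^sub>R a) x1 < \<rho>"
        using ball_seq[OF \<rho>] by blast
      have "\<forall>n\<ge>n0. (\<Sum>k\<le>p. (1/real n)^k *\<^sub>R W k) \<in> center"
        using n0 Xc W(1) by metis
      then have "W p \<in> center" using coeff_center[where m=n0 and N=p and h=W] by simp
      then show ?thesis using W(2) by simp
    qed
    have "b \<in> center" for b :: 'a
    proof -
      obtain W where W: "\<forall>t. ppow (z + t *\<^sub>R b) p = (\<Sum>k\<le>p. t^k *\<^sub>R W k)"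
        "z \<in> center \<longrightarrow> z * W 1 = of_nat p *\<^sub>R (ppow z p * b)"
        using expand[OF p, of z b] by blast
      have "\<forall>n\<ge>0. (\<Sum>k\<le>p. (1/real n)^k *\<^sub>R W k) \<in> center"
        using Ac W(1) by metis
      then have "W 1 \<in> center" using coeff_center p by (metis One_nat_def Suc_leI)
      then have "z * W 1 \<in> center" using center_mult[OF zc] by blast
      then have "of_nat p *\<^sub>R (ppow z p * b) \<in> center" using W(2) zc by simp
      then have "(1 / of_nat p) *\<^sub>R (of_nat p *\<^sub>R (ppow z p * b)) \<in> center" by (rule center_scaleR)
      then have "ppow z p * b \<in> center" using p by simp
      then show "b \<in> center"
        by (rule central_cancel[OF assms(1) ppow_center[OF zc] ppow_nz[OF assms(1) zc z0]])
    qed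
    then show "\<forall>x y::'a. x * y = y * x" by (simp add: center_iff)
  qed
qed

end
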